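(* Let $K$ be a finite simplicial complex, $(f,g)\colon|K|\to\mathbb{R}^n\times\mathbb{R}^k$ continuous, and $\alpha>0$. Let $U:=\{x\in|K| : g_i(x)\le-\alpha\text{ for all }i=1,\dots,k\}$. Then every $\alpha$-perturbation of the system $f=0\wedge g\le0$ is satisfiable if and only if every $\alpha$-perturbation $h\colon U\to\mathbb{R}^n$ of $f|_U$ has a root in $U$.
   Context: All norms are max-norms: for a function $h$ on a set $D$ with values in some $\mathbb{R}^p$, $\|h\|:=\sup_{x\in D}\max_i|h_i(x)|$. An $\alpha$-perturbation of $f|_U$ is a continuous $h\colon U\to\mathbb{R}^n$ with $\|h-f|_U\|\le\alpha$. An $\alpha$-perturbation of the system $f=0\wedge g\le0$ is a system $\tilde f=0\wedge\tilde g\le0$ with continuous $\tilde f\colon|K|\to\mathbb{R}^n$, $\tilde g\colon|K|\to\mathbb{R}^k$, $\|\tilde f-f\|\le\alpha$, $\|\tilde g-g\|\le\alpha$; it is satisfiable if there is $x\in|K|$ with $\tilde f(x)=0$ and $\tilde g_i(x)\le0$ for all $i$. *)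

theory Defs
  imports "HOL-Analysis.Analysis"
begin

text \<open>Vector-valued maps into R^m are represented as functions D -> (nat -> real),
  where only the components i < m matter. The max-norm condition
  sup_{x in D} max_i |h_i x - f_i x| <= alpha is written componentwise.\<close>

definition cont_vec :: "'a::topological_space set \<Rightarrow> nat \<Rightarrow> ('a \<Rightarrow> nat \<Rightarrow> real) \<Rightarrow> bool" where
  "cont_vec D m h \<longleftrightarrow> (\<forall>i<m. continuous_on D (\<lambda>x. h x i))"

definition close_vec :: "'a set \<Rightarrow> nat \<Rightarrow> real \<Rightarrow> ('a \<Rightarrow> nat \<Rightarrow> real) \<Rightarrow> ('a \<Rightarrow> nat \<Rightarrow> real) \<Rightarrow> bool" where
  "close_vec D m \<alpha> h f \<longleftrightarrow> (\<forall>x\<in>D. \<forall>i<m. \<bar>h x i - f x i\<bar> \<le> \<alpha>)"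

definition perturbation :: "'a::topological_space set \<Rightarrow> nat \<Rightarrow> real \<Rightarrow> ('a \<Rightarrow> nat \<Rightarrow> real) \<Rightarrow> ('a \<Rightarrow> nat \<Rightarrow> real) \<Rightarrow> bool" where
  "perturbation D m \<alpha> f h \<longleftrightarrow> cont_vec D m h \<and> close_vec D m \<alpha> h f"

definition satisfiable :: "'a set \<Rightarrow> nat \<Rightarrow> nat \<Rightarrow> ('a \<Rightarrow> nat \<Rightarrow> real) \<Rightarrow> ('a \<Rightarrow> nat \<Rightarrow> real) \<Rightarrow> bool" where
  "satisfiable D n k f g \<longleftrightarrow> (\<exists>x\<in>D. (\<forall>i<n. f x i = 0) \<and> (\<forall>i<k. g x i \<le> 0))"

end

theory Submission
  imports Defs
begin

theorem lemma3p7: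
  fixes K :: "'a::euclidean_space set set"
    and f g :: "'a \<Rightarrow> nat \<Rightarrow> real" and n k :: nat and \<alpha> :: real
  assumes "simplicial_complex K"
    and "cont_vec (\<Union>K) n f" and "cont_vec (\<Union>K) k g"
    and "\<alpha> > 0"
  defines "U \<equiv> {x \<in> \<Union>K. \<forall>i<k. g x i \<le> - \<alpha>}"
  shows "(\<forall>f' g'. perturbation (\<Union>K) n \<alpha> f f' \<and> perturbation (\<Union>K) k \<alpha> g g'
                   \<longrightarrow> satisfiable (\<Union>K) n k f' g')
         \<longleftrightarrow> (\<forall>h. perturbation U n \<alpha> f h \<longrightarrow> (\<exists>x\<in>U. \<forall>i<n. h x i = 0))"
proof
  assume L: "\<forall>f' g'. perturbation (\<Union>K) n \<alpha> f f' \<and> perturbation (\<Union>K) k \<alpha> g g'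
                   \<longrightarrow> satisfiable (\<Union>K) n k f' g'"
  show "\<forall>h. perturbation U n \<alpha> f h \<longrightarrow> (\<exists>x\<in>U. \<forall>i<n. h x i = 0)"
  proof (intro allI impI)
    fix h assume hp: "perturbation U n \<alpha> f h"
    have clU: "closedin (top_of_set (\<Union>K)) U"
    proof (cases "k = 0")
      case True
      then have "U = \<Union>K" by (auto simp: U_def)
      then show ?thesis by simp
    next
      case False
      have "U = (\<Inter>i\<in>{..<k}. \<Union>K \<inter> (\<lambda>x. g x i) -` {..-\<alpha>})"
        using False by (auto simp: U_def)
      moreover have "closedin (top_of_set (\<Union>K)) (\<Inter>i\<in>{..<k}. \<Union>K \<inter> (\<lambda>x. g x i) -` {..-\<alpha>})"
        apply (rule closedin_INT)
        using False apply auto[1]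
        apply (rule continuous_closedin_preimage)
        using assms(3) by (auto simp: cont_vec_def)
      ultimately show ?thesis by simp
    qed
    have "\<forall>i<n. \<exists>e. continuous_on (\<Union>K) e \<and> (\<forall>x\<in>U. e x = h x i - f x i)
             \<and> (\<forall>x\<in>\<Union>K. e x \<in> cbox (-\<alpha>) \<alpha>)"
    proof (intro allI impI)
      fix i assume i: "i < n"
      have UK: "U \<subseteq> \<Union>K" by (auto simp: U_def)
      have c: "continuous_on U (\<lambda>x. h x i - f x i)"
        apply (rule continuous_on_diff)
        using hp i apply (simp add: perturbation_def cont_vec_def)
        using assms(2) i UK continuous_on_subset by (fastforce simp: cont_vec_def)
      obtain e where "continuous_on (\<Union>K) e" "\<And>x. x \<in> U \<Longrightarrow> e x = h x i - f x i"
          "\<And>x. x \<in> \<Union>K \<Longrightarrow> e x \<in> cbox (-\<alpha>) \<alpha>"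
        apply (rule Tietze_closed_interval_1[OF c clU, where a="-\<alpha>" and b="\<alpha>"])
        using assms(4) apply simp
        using hp i apply (force simp: perturbation_def close_vec_def abs_le_iff)
        by blast
      then show "\<exists>e. continuous_on (\<Union>K) e \<and> (\<forall>x\<in>U. e x = h x i - f x i)
             \<and> (\<forall>x\<in>\<Union>K. e x \<in> cbox (-\<alpha>) \<alpha>)" by blast
    qed
    then obtain E where E: "\<And>i. i < n \<Longrightarrow> continuous_on (\<Union>K) (E i) \<and> (\<forall>x\<in>U. E i x = h x i - f x i)
             \<and> (\<forall>x\<in>\<Union>K. E i x \<in> cbox (-\<alpha>) \<alpha>)"
      by metis
    define f' where "f' = (\<lambda>x i. f x i + E i x)"
    define g' where "g' = (\<lambda>x i. g x i + \<alpha>)"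
    have p1: "perturbation (\<Union>K) n \<alpha> f f'"
      unfolding perturbation_def cont_vec_def close_vec_def f'_def
    proof (intro conjI allI impI ballI)
      fix i assume i: "i < n"
      show "continuous_on (\<Union>K) (\<lambda>x. f x i + E i x)"
        using E[OF i] assms(2) i by (auto simp: cont_vec_def intro!: continuous_on_add)
    next
      fix x i assume "x \<in> \<Union>K" "i < n"
      then show "\<bar>f x i + E i x - f x i\<bar> \<le> \<alpha>" using E[of i] by (force simp: abs_le_iff)
    qed
    have p2: "perturbation (\<Union>K) k \<alpha> g g'"
      unfolding perturbation_def cont_vec_def close_vec_def g'_def
      using assms(3,4) by (auto simp: cont_vec_def intro!: continuous_on_add)
    obtain x where x: "x \<in> \<Union>K" "\<forall>i<n. f' x i = 0" "\<forall>i<k. g' x i \<le> 0"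
      using L p1 p2 unfolding satisfiable_def by blast
    have xU: "x \<in> U" using x by (auto simp: U_def g'_def)
    have "\<forall>i<n. h x i = 0" using x(2) E xU by (auto simp: f'_def)
    then show "\<exists>x\<in>U. \<forall>i<n. h x i = 0" using xU by blast
  qed
next
  assume R: "\<forall>h. perturbation U n \<alpha> f h \<longrightarrow> (\<exists>x\<in>U. \<forall>i<n. h x i = 0)"
  show "\<forall>f' g'. perturbation (\<Union>K) n \<alpha> f f' \<and> perturbation (\<Union>K) k \<alpha> g g'
                   \<longrightarrow> satisfiable (\<Union>K) n k f' g'"
  proof (intro allI impI)
    fix f' g' assume p: "perturbation (\<Union>K) n \<alpha> f f' \<and> perturbation (\<Union>K) k \<alpha> g g'"
    have UK: "U \<subseteq> \<Union>K" by (auto simp: U_def)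
    have "perturbation U n \<alpha> f f'"
      using p UK continuous_on_subset
      by (fastforce simp: perturbation_def cont_vec_def close_vec_def)
    then obtain x where x: "x \<in> U" "\<forall>i<n. f' x i = 0" using R by blast
    have "\<forall>i<k. g' x i \<le> 0"
    proof (intro allI impI)
      fix i assume i: "i < k"
      have "\<bar>g' x i - g x i\<bar> \<le> \<alpha>" using p x UK i by (auto simp: perturbation_def close_vec_def)
      moreover have "g x i \<le> -\<alpha>" using x i by (auto simp: U_def)
      ultimately show "g' x i \<le> 0" by linarith
    qed
    then show "satisfiable (\<Union>K) n k f' g'" using x UK unfolding satisfiable_def by blast
  qed
qed

end
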